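(* Let $\mathcal{C}$ be a family of grounded curves (not necessarily $x$-monotone), where each curve $\gamma\in\mathcal{C}$ has a designated endpoint $p(\gamma)$ on the line $\{x=0\}$ and these endpoints have pairwise distinct $y$-coordinates. Let $G$ be the intersection graph of $\mathcal{C}$, and let $<$ be the total ordering of $\mathcal{C}$ according to the $y$-coordinates of the endpoints $p(\gamma)$. Then: (1) $G_<$ does not contain $M_1$ as an induced ordered subgraph; (2) if, in addition, all members of $\mathcal{C}$ are $x$-monotone, then the complement $\overline{G}_<$ (with the same ordering) does not contain the monotone path $P_4$ as an induced ordered subgraph.
   Context: A curve is the image of a continuous map $\phi:[0,1]\to\mathbb{R}^2$; it is $x$-monotone if every vertical line meets it in at most one point. A curve is grounded if one of its endpoints lies on $\{x=0\}$ and the whole curve lies in $\{x\ge0\}$. The intersection graph has the curves as vertices, adjacent iff they intersect. An ordered graph is a graph with a total order on its vertices; $H_{<'}$ is an induced ordered subgraph of $G_<$ if there is an order-preserving injection $\phi:V(H)\to V(G)$ with $uv\in E(H)\iff \phi(u)\phi(v)\in E(G)$. $M_1$ is the ordered graph on $1<2<3<4$ with edges $\{1,3\}$ and $\{2,4\}$ only. $P_4$ is the ordered graph on $v_1<v_2<v_3<v_4$ with edges $v_1v_2,v_2v_3,v_3v_4$ only. *)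

theory Defs
  imports "HOL-Analysis.Analysis"
begin

text \<open>The designated endpoint
  p(gamma) is taken to be pathstart g (no loss of generality: reversing the
  parametrisation does not change the image).\<close>

definition grounded_at_start :: "(real \<Rightarrow> real \<times> real) \<Rightarrow> bool" where
  "grounded_at_start g \<longleftrightarrow> path g \<and> fst (pathstart g) = 0 \<and>
     (\<forall>q\<in>path_image g. fst q \<ge> 0)"

definition x_monotone :: "(real \<Rightarrow> real \<times> real) \<Rightarrow> bool" where
  "x_monotone g \<longleftrightarrow> (\<forall>p\<in>path_image g. \<forall>q\<in>path_image g. fst p = fst q \<longrightarrow> p = q)"

definition contains_induced_ordered ::
  "nat \<Rightarrow> (nat \<Rightarrow> nat \<Rightarrow> bool) \<Rightarrow> 'a set \<Rightarrow> ('a \<Rightarrow> 'a \<Rightarrow> bool) \<Rightarrow> ('a \<Rightarrow> 'a \<Rightarrow> bool) \<Rightarrow> bool" where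
  "contains_induced_ordered n H V lt E \<longleftrightarrow>
     (\<exists>\<phi>. (\<forall>i<n. \<phi> i \<in> V) \<and> (\<forall>i<n. \<forall>j<n. i < j \<longrightarrow> lt (\<phi> i) (\<phi> j)) \<and>
          (\<forall>i<n. \<forall>j<n. i \<noteq> j \<longrightarrow> (H i j \<longleftrightarrow> E (\<phi> i) (\<phi> j))))"

text \<open>M_1 on vertices 0<1<2<3 (paper's 1<2<3<4): edges {1,3},{2,4}.\<close>
definition M1_edge :: "nat \<Rightarrow> nat \<Rightarrow> bool" where
  "M1_edge i j \<longleftrightarrow> {i, j} = {0, 2} \<or> {i, j} = {1, 3}"

definition P4_edge :: "nat \<Rightarrow> nat \<Rightarrow> bool" where
  "P4_edge i j \<longleftrightarrow> i = j + 1 \<or> j = i + 1"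

definition int_graph :: "('i \<Rightarrow> real \<Rightarrow> real \<times> real) \<Rightarrow> 'i \<Rightarrow> 'i \<Rightarrow> bool" where
  "int_graph g a b \<longleftrightarrow> a \<noteq> b \<and> path_image (g a) \<inter> path_image (g b) \<noteq> {}"

definition co_int_graph :: "('i \<Rightarrow> real \<Rightarrow> real \<times> real) \<Rightarrow> 'i \<Rightarrow> 'i \<Rightarrow> bool" where
  "co_int_graph g a b \<longleftrightarrow> a \<noteq> b \<and> path_image (g a) \<inter> path_image (g b) = {}"

definition end_order :: "('i \<Rightarrow> real \<Rightarrow> real \<times> real) \<Rightarrow> 'i \<Rightarrow> 'i \<Rightarrow> bool" where
  "end_order g a b \<longleftrightarrow> snd (pathstart (g a)) < snd (pathstart (g b))"

end

theory Submission
  imports Defs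
begin
definition T :: "real \<times> real \<Rightarrow> real^2" where "T p = vector [snd p, fst p]"
lemma T_comp[simp]: "T p $ 1 = snd p" "T p $ 2 = fst p" by (simp_all add: T_def)
lemma T_inj: "T p = T q \<Longrightarrow> p = q"
  by (metis T_comp prod_eq_iff)
lemma T_lin: "linear T"
  apply (rule linearI) apply (simp_all add: vec_eq_iff T_def forall_2)
  done
lemma T_cont: "continuous_on S T"
  using T_lin linear_continuous_on linear_conv_bounded_linear by blast

lemma cross:
  fixes f g :: "real \<Rightarrow> real \<times> real"
  assumes pf: "path f" and pg: "path g"
    and xf: "\<forall>p\<in>path_image f. fst p \<ge> 0" and xg: "\<forall>p\<in>path_image g. fst p \<ge> 0"
    and e1: "fst (pathstart f) = 0" and e2: "fst (pathfinish f) = 0"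
    and e3: "fst (pathstart g) = 0" and e4: "fst (pathfinish g) = 0"
    and o1: "snd (pathstart f) < snd (pathstart g)"
    and o2: "snd (pathstart g) < snd (pathfinish f)"
    and o3: "snd (pathfinish f) < snd (pathfinish g)"
  shows "path_image f \<inter> path_image g \<noteq> {}"
proof -
  have "bounded (path_image f \<union> path_image g)"
    by (simp add: bounded_Un bounded_path_image pf pg)
  then obtain B where B: "\<And>p. p \<in> path_image f \<union> path_image g \<Longrightarrow> norm p \<le> B"
    unfolding bounded_iff by blast
  have nb: "\<bar>fst p\<bar> \<le> B \<and> \<bar>snd p\<bar> \<le> B" if "p \<in> path_image f \<union> path_image g" for p
  proof -
    have "norm (fst p) \<le> norm p" "norm (snd p) \<le> norm p"
      using norm_fst_le[of "fst p" "snd p"] norm_snd_le[of "snd p" "fst p"] by simp_all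
    then show ?thesis using B[OF that] by simp
  qed
  define a :: "real^2" where "a = vector [-B, 0]"
  define b :: "real^2" where "b = vector [B, B]"
  have box: "T ` (path_image f \<union> path_image g) \<subseteq> cbox a b"
  proof
    fix z assume "z \<in> T ` (path_image f \<union> path_image g)"
    then obtain p where p: "p \<in> path_image f \<union> path_image g" "z = T p" by blast
    have "fst p \<ge> 0" using p(1) xf xg by blast
    then show "z \<in> cbox a b" using nb[OF p(1)] p(2)
      by (auto simp: mem_box_cart forall_2 a_def b_def)
  qed
  have P1: "path (T \<circ> f)" "path (T \<circ> g)"
    using pf pg T_cont unfolding path_def by (metis continuous_on_compose)+
  obtain z where z: "z \<in> path_image (T \<circ> f)" "z \<in> path_image (T \<circ> g)"
  proof (rule fashoda_interlace[OF P1, of a b])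
    show "path_image (T \<circ> f) \<subseteq> cbox a b" "path_image (T \<circ> g) \<subseteq> cbox a b"
      using box by (auto simp: path_image_compose)
  qed (use e1 e2 e3 e4 o1 o2 o3 in \<open>simp_all add: pathstart_compose pathfinish_compose a_def\<close>)
  then obtain p q where "p \<in> path_image f" "q \<in> path_image g" "T p = T q"
    by (auto simp: path_image_compose)
  then show ?thesis using T_inj by blast
qed
lemma segD:
  fixes a b r :: "real \<times> real"
  assumes "r \<in> closed_segment a b"
  shows "min (fst a) (fst b) \<le> fst r \<and> fst r \<le> max (fst a) (fst b) \<and>
         min (snd a) (snd b) \<le> snd r \<and> snd r \<le> max (snd a) (snd b)"
proof -
  have "fst r \<in> closed_segment (fst a) (fst b) \<and> snd r \<in> closed_segment (snd a) (snd b)"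
    using closed_segment_PairD[of "fst r" "snd r" "fst a" "snd a" "fst b" "snd b"] assms by simp
  then show ?thesis by (auto simp: closed_segment_eq_real_ivl split: if_splits)
qed

lemma join_path:
  fixes u v :: "real \<Rightarrow> real \<times> real"
  assumes "path u" "path v" "z \<in> path_image u" "z \<in> path_image v"
  shows "\<exists>h. path h \<and> path_image h \<subseteq> path_image u \<union> path_image v \<and>
             pathstart h = pathstart u \<and> pathfinish h = pathstart v"
proof -
  obtain s where s: "s \<in> {0..1}" "u s = z" using assms(3) by (auto simp: path_image_def)
  obtain t where t: "t \<in> {0..1}" "v t = z" using assms(4) by (auto simp: path_image_def)
  define h where "h = subpath 0 s u +++ reversepath (subpath 0 t v)"
  have "path h" unfolding h_def using assms s t
    by (intro path_join_imp) (auto simp: path_subpath pathfinish_subpath pathstart_subpath)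
  moreover have "path_image h \<subseteq> path_image u \<union> path_image v" unfolding h_def
    using s t path_image_subpath_subset[of 0 s u] path_image_subpath_subset[of 0 t v]
    by (auto simp: path_image_join pathfinish_subpath pathstart_subpath)
  moreover have "pathstart h = pathstart u \<and> pathfinish h = pathstart v"
    unfolding h_def by (simp add: pathfinish_subpath pathstart_subpath, simp add: pathstart_def)
  ultimately show ?thesis by blast
qed

lemma part1:
  fixes ga gb gc gd :: "real \<Rightarrow> real \<times> real"
  assumes "grounded_at_start ga" "grounded_at_start gb" "grounded_at_start gc" "grounded_at_start gd"
    and "path_image ga \<inter> path_image gc \<noteq> {}" "path_image gb \<inter> path_image gd \<noteq> {}"
    and "path_image ga \<inter> path_image gb = {}" "path_image ga \<inter> path_image gd = {}"
    and "path_image gc \<inter> path_image gb = {}" "path_image gc \<inter> path_image gd = {}"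
    and "snd (pathstart ga) < snd (pathstart gb)" "snd (pathstart gb) < snd (pathstart gc)"
    "snd (pathstart gc) < snd (pathstart gd)"
  shows False
proof -
  obtain z where "z \<in> path_image ga" "z \<in> path_image gc" using assms(5) by blast
  then obtain f where f: "path f" "path_image f \<subseteq> path_image ga \<union> path_image gc"
    "pathstart f = pathstart ga" "pathfinish f = pathstart gc"
    using join_path assms(1,3) unfolding grounded_at_start_def by metis
  obtain w where "w \<in> path_image gb" "w \<in> path_image gd" using assms(6) by blast
  then obtain g where g: "path g" "path_image g \<subseteq> path_image gb \<union> path_image gd"
    "pathstart g = pathstart gb" "pathfinish g = pathstart gd"
    using join_path assms(2,4) unfolding grounded_at_start_def by metis
  have "path_image f \<inter> path_image g \<noteq> {}"
    apply (rule cross[OF f(1) g(1)])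
    using f g assms(1-4,11-13) unfolding grounded_at_start_def by auto
  then show False using f(2) g(2) assms(7-10) by blast
qed

lemma sep:
  fixes u v :: "real \<Rightarrow> real \<times> real"
  assumes gu: "grounded_at_start u" and gv: "grounded_at_start v"
    and mu: "x_monotone u" and mv: "x_monotone v"
    and dis: "path_image u \<inter> path_image v = {}"
    and ord: "snd (pathstart u) < snd (pathstart v)"
    and p: "p \<in> path_image u" and q: "q \<in> path_image v" and X: "fst p = fst q"
  shows "snd p < snd q"
proof (rule ccontr)
  assume "\<not> snd p < snd q"
  moreover have "p \<noteq> q" using p q dis by blast
  ultimately have lt: "snd q < snd p" using X by (metis linorder_neqE_linordered_idom prod_eqI)
  have pu: "path u" and pv: "path v" using gu gv by (auto simp: grounded_at_start_def)
  have "bounded (path_image u \<union> path_image v)"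
    by (simp add: bounded_Un bounded_path_image pu pv)
  then obtain B0 where B0: "\<And>r. r \<in> path_image u \<union> path_image v \<Longrightarrow> norm r \<le> B0"
    unfolding bounded_iff by blast
  define M where "M = B0 + 1"
  have bnd: "\<bar>snd r\<bar> < M" if "r \<in> path_image u \<union> path_image v" for r
  proof -
    have "norm (snd r) \<le> norm r"
      using norm_snd_le[of "snd r" "fst r"] by simp
    then show ?thesis using B0[OF that] by (simp add: M_def)
  qed
  define Xc where "Xc = fst p"
  have X0: "Xc \<ge> 0" using p gu by (auto simp: grounded_at_start_def Xc_def)
  obtain s where s: "s \<in> {0..1}" "u s = p" using p by (auto simp: path_image_def)
  obtain t where t: "t \<in> {0..1}" "v t = q" using q by (auto simp: path_image_def)
  define g where "g = subpath 0 s u +++ linepath p (Xc, M) +++ linepath (Xc, M) (0, M)"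
  define f where "f = subpath 0 t v +++ linepath q (Xc, -M) +++ linepath (Xc, -M) (0, -M)"
  have subu: "path_image (subpath 0 s u) \<subseteq> path_image u"
    using s path_image_subpath_subset[of 0 s u] by auto
  have subv: "path_image (subpath 0 t v) \<subseteq> path_image v"
    using t path_image_subpath_subset[of 0 t v] by auto
  have pg: "path g" unfolding g_def using pu s
    by (intro path_join_imp) (auto simp: path_subpath pathfinish_subpath pathstart_subpath)
  have pf: "path f" unfolding f_def using pv t
    by (intro path_join_imp) (auto simp: path_subpath pathfinish_subpath pathstart_subpath)
  have ig: "path_image g = path_image (subpath 0 s u) \<union> closed_segment p (Xc, M) \<union> closed_segment (Xc, M) (0, M)"
    unfolding g_def using s by (simp add: path_image_join pathfinish_subpath pathstart_subpath Un_assoc)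
  have iF: "path_image f = path_image (subpath 0 t v) \<union> closed_segment q (Xc, -M) \<union> closed_segment (Xc, -M) (0, -M)"
    unfolding f_def using t by (simp add: path_image_join pathfinish_subpath pathstart_subpath Un_assoc)
  have sg: "pathstart g = pathstart u" "pathfinish g = (0, M)"
    unfolding g_def by (simp_all add: pathfinish_subpath pathstart_subpath, simp add: pathstart_def)
  have sf: "pathstart f = pathstart v" "pathfinish f = (0, -M)"
    unfolding f_def by (simp_all add: pathfinish_subpath pathstart_subpath, simp add: pathstart_def)
  have "path_image (reversepath f) \<inter> path_image g \<noteq> {}"
  proof (rule cross)
    show "path (reversepath f)" "path g" using pf pg by auto
    show "\<forall>r\<in>path_image (reversepath f). 0 \<le> fst r"
      using subv gv X0 X unfolding path_image_reversepath iF grounded_at_start_def Xc_def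
      by (auto dest!: segD)
    show "\<forall>r\<in>path_image g. 0 \<le> fst r"
      using subu gu X0 unfolding ig grounded_at_start_def Xc_def
      by (auto dest!: segD)
    show "fst (pathstart (reversepath f)) = 0" "fst (pathfinish (reversepath f)) = 0"
      "fst (pathstart g) = 0" "fst (pathfinish g) = 0"
      using sf sg gu gv by (auto simp: grounded_at_start_def)
    have "\<bar>snd (pathstart u)\<bar> < M" "\<bar>snd (pathstart v)\<bar> < M"
      using bnd pu pv pathstart_in_path_image by blast+
    then show "snd (pathstart (reversepath f)) < snd (pathstart g)"
      "snd (pathstart g) < snd (pathfinish (reversepath f))"
      "snd (pathfinish (reversepath f)) < snd (pathfinish g)"
      using sf sg ord by auto
  qed
  then obtain r where r: "r \<in> path_image f" "r \<in> path_image g" by auto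
  have bp: "\<bar>snd p\<bar> < M" "\<bar>snd q\<bar> < M" using bnd p q by blast+
  have um: "r' = p" if "r' \<in> path_image u" "fst r' = Xc" for r'
    using mu that p unfolding x_monotone_def Xc_def by blast
  have vm: "r' = q" if "r' \<in> path_image v" "fst r' = Xc" for r'
    using mv that q X unfolding x_monotone_def Xc_def by metis
  have ru: "r \<in> path_image u \<or> r \<in> closed_segment p (Xc, M) \<or> r \<in> closed_segment (Xc, M) (0, M)"
    using r(2) subu ig by blast
  have rv: "r \<in> path_image v \<or> r \<in> closed_segment q (Xc, -M) \<or> r \<in> closed_segment (Xc, -M) (0, -M)"
    using r(1) subv iF by blast
  have X': "fst q = Xc" using X Xc_def by simp
  show False
    using ru
  proof (elim disjE)
    assume r1: "r \<in> path_image u"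
    show False using rv
    proof (elim disjE)
      assume "r \<in> closed_segment q (Xc, -M)"
      then have "fst r = Xc" "snd r \<le> snd q" using segD[of r q "(Xc, -M)"] X' bp by auto
      then show False using um[OF r1] lt by auto
    next
      assume "r \<in> closed_segment (Xc, -M) (0, -M)"
      then have "snd r = -M" using segD[of r "(Xc, -M)" "(0, -M)"] by auto
      then show False using bnd[of r] r1 by auto
    qed (use dis r1 in blast)
  next
    assume r1: "r \<in> closed_segment p (Xc, M)"
    then have f1: "fst r = Xc" "snd p \<le> snd r" using segD[of r p "(Xc, M)"] bp by (auto simp: Xc_def)
    show False using rv
    proof (elim disjE)
      assume "r \<in> path_image v"
      then show False using vm f1 lt by auto
    next
      assume "r \<in> closed_segment q (Xc, -M)"
      then have "snd r \<le> snd q" using segD[of r q "(Xc, -M)"] X' bp by auto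
      then show False using f1 lt by auto
    next
      assume "r \<in> closed_segment (Xc, -M) (0, -M)"
      then have "snd r = -M" using segD[of r "(Xc, -M)" "(0, -M)"] by auto
      then show False using f1 bp by auto
    qed
  next
    assume r1: "r \<in> closed_segment (Xc, M) (0, M)"
    then have f1: "snd r = M" using segD[of r "(Xc, M)" "(0, M)"] by auto
    show False using rv
    proof (elim disjE)
      assume "r \<in> path_image v"
      then show False using bnd[of r] f1 by auto
    next
      assume "r \<in> closed_segment q (Xc, -M)"
      then have "snd r \<le> snd q" using segD[of r q "(Xc, -M)"] X' bp by auto
      then show False using f1 bp by auto
    next
      assume "r \<in> closed_segment (Xc, -M) (0, -M)"
      then have "snd r = -M" using segD[of r "(Xc, -M)" "(0, -M)"] by auto
      then show False using f1 bp by auto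
    qed
  qed
qed

lemma xpoint:
  fixes u :: "real \<Rightarrow> real \<times> real"
  assumes "path u" "a \<in> path_image u" "b \<in> path_image u" "fst a \<le> x" "x \<le> fst b"
  shows "\<exists>r\<in>path_image u. fst r = x"
proof -
  have ip: "z \<bullet> (1, 0) = fst z" for z :: "real \<times> real"
    by (cases z) (simp add: inner_Pair)
  show ?thesis
    using connected_ivt_component[OF connected_path_image[OF assms(1)] assms(2,3), of "(1,0)" x] assms(4,5)
    unfolding ip by blast
qed

lemma part2:
  fixes ga gb gc gd :: "real \<Rightarrow> real \<times> real"
  assumes G: "grounded_at_start ga" "grounded_at_start gb" "grounded_at_start gc" "grounded_at_start gd"
    and XM: "x_monotone ga" "x_monotone gb" "x_monotone gc" "x_monotone gd"
    and I: "path_image ga \<inter> path_image gc \<noteq> {}" "path_image gb \<inter> path_image gd \<noteq> {}"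
    and D: "path_image ga \<inter> path_image gb = {}" "path_image gb \<inter> path_image gc = {}"
      "path_image gc \<inter> path_image gd = {}"
    and O: "snd (pathstart ga) < snd (pathstart gb)" "snd (pathstart gb) < snd (pathstart gc)"
    "snd (pathstart gc) < snd (pathstart gd)"
  shows False
proof -
  obtain z where z: "z \<in> path_image ga" "z \<in> path_image gc" using I(1) by blast
  obtain w where w: "w \<in> path_image gb" "w \<in> path_image gd" using I(2) by blast
  have P: "path ga" "path gb" "path gc" "path gd" using G by (auto simp: grounded_at_start_def)
  have S: "pathstart ga \<in> path_image ga" "pathstart gb \<in> path_image gb" "pathstart gc \<in> path_image gc"
    using P pathstart_in_path_image by blast+
  have F: "fst (pathstart gb) = 0" "fst (pathstart gc) = 0" "fst w \<ge> 0" "fst z \<ge> 0"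
    using G w z by (auto simp: grounded_at_start_def)
  show False
  proof (cases "fst w \<le> fst z")
    case True
    then obtain r where r: "r \<in> path_image gc" "fst r = fst w"
      using xpoint[OF P(3) S(3) z(2), of "fst w"] F by auto
    have "snd w < snd r" using sep[OF G(2,3) XM(2,3) D(2) O(2) w(1) r(1)] r by simp
    moreover have "snd r < snd w" using sep[OF G(3,4) XM(3,4) D(3) O(3) r(1) w(2)] r by simp
    ultimately show False by simp
  next
    case False
    then obtain r where r: "r \<in> path_image gb" "fst r = fst z"
      using xpoint[OF P(2) S(2) w(1), of "fst z"] F by auto
    have "snd z < snd r" using sep[OF G(1,2) XM(1,2) D(1) O(1) z(1) r(1)] r by simp
    moreover have "snd r < snd z" using sep[OF G(2,3) XM(2,3) D(2) O(2) r(1) z(2)] r by simp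
    ultimately show False by simp
  qed
qed

lemma cioE:
  assumes "contains_induced_ordered n H V lt E"
  obtains \<phi> where "\<forall>i<n. \<phi> i \<in> V" "\<forall>i<n. \<forall>j<n. i < j \<longrightarrow> lt (\<phi> i) (\<phi> j)"
    "\<forall>i<n. \<forall>j<n. i \<noteq> j \<longrightarrow> (H i j \<longleftrightarrow> E (\<phi> i) (\<phi> j))"
proof -
  from assms[unfolded contains_induced_ordered_def] obtain \<phi> where
    h: "(\<forall>i<n. \<phi> i \<in> V) \<and> (\<forall>i<n. \<forall>j<n. i < j \<longrightarrow> lt (\<phi> i) (\<phi> j)) \<and>
        (\<forall>i<n. \<forall>j<n. i \<noteq> j \<longrightarrow> (H i j \<longleftrightarrow> E (\<phi> i) (\<phi> j)))"
    by (rule exE)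
  show ?thesis by (rule that[OF conjunct1[OF h] conjunct1[OF conjunct2[OF h]] conjunct2[OF conjunct2[OF h]]])
qed

theorem lemma8:
  fixes C :: "'i set" and g :: "'i \<Rightarrow> real \<Rightarrow> real \<times> real"
  assumes grounded: "\<And>a. a \<in> C \<Longrightarrow> grounded_at_start (g a)"
    and distinct_ends: "\<And>a b. a \<in> C \<Longrightarrow> b \<in> C \<Longrightarrow> a \<noteq> b \<Longrightarrow>
            snd (pathstart (g a)) \<noteq> snd (pathstart (g b))"
  shows "\<not> contains_induced_ordered 4 M1_edge C (end_order g) (int_graph g) \<and>
         ((\<forall>a\<in>C. x_monotone (g a)) \<longrightarrow>
           \<not> contains_induced_ordered 4 P4_edge C (end_order g) (co_int_graph g))"
proof (intro conjI impI notI)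
  assume "contains_induced_ordered 4 M1_edge C (end_order g) (int_graph g)"
  then obtain \<phi> where V: "\<forall>i<4. \<phi> i \<in> C" and L: "\<forall>i<4. \<forall>j<4. i < j \<longrightarrow> end_order g (\<phi> i) (\<phi> j)"
    and E: "\<forall>i<4. \<forall>j<4. i \<noteq> j \<longrightarrow> (M1_edge i j \<longleftrightarrow> int_graph g (\<phi> i) (\<phi> j))"
    by (rule cioE)
  have o: "snd (pathstart (g (\<phi> 0))) < snd (pathstart (g (\<phi> 1)))"
    "snd (pathstart (g (\<phi> 1))) < snd (pathstart (g (\<phi> 2)))"
    "snd (pathstart (g (\<phi> 2))) < snd (pathstart (g (\<phi> 3)))"
    using L unfolding end_order_def by auto
  have ne: "\<phi> i \<noteq> \<phi> j" if "i < j" "j < 4" for i j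
  proof
    assume "\<phi> i = \<phi> j"
    then show False using L[rule_format, of i j] that unfolding end_order_def by simp
  qed
  have e: "M1_edge i j \<longleftrightarrow> path_image (g (\<phi> i)) \<inter> path_image (g (\<phi> j)) \<noteq> {}"
    if "i < j" "j < 4" for i j
  proof -
    have "i < 4" "i \<noteq> j" using that by auto
    then show ?thesis using E[rule_format, of i j] ne[OF that] that unfolding int_graph_def by simp
  qed
  have m: "M1_edge 0 2" "M1_edge 1 3" "\<not> M1_edge 0 1" "\<not> M1_edge 0 3" "\<not> M1_edge 1 2" "\<not> M1_edge 2 3"
    by (auto simp: M1_edge_def doubleton_eq_iff)
  show False
  proof (rule part1[OF grounded grounded grounded grounded _ _ _ _ _ _ o])
    show "\<phi> 0 \<in> C" "\<phi> 1 \<in> C" "\<phi> 2 \<in> C" "\<phi> 3 \<in> C" using V by simp_all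
    show "path_image (g (\<phi> 0)) \<inter> path_image (g (\<phi> 2)) \<noteq> {}" using e[of 0 2] m(1) by simp
    show "path_image (g (\<phi> 1)) \<inter> path_image (g (\<phi> 3)) \<noteq> {}" using e[of 1 3] m(2) by simp
    show "path_image (g (\<phi> 0)) \<inter> path_image (g (\<phi> 1)) = {}" using e[of 0 1] m(3) by simp
    show "path_image (g (\<phi> 0)) \<inter> path_image (g (\<phi> 3)) = {}" using e[of 0 3] m(4) by simp
    show "path_image (g (\<phi> 2)) \<inter> path_image (g (\<phi> 1)) = {}" using e[of 1 2] m(5) by (simp add: Int_commute)
    show "path_image (g (\<phi> 2)) \<inter> path_image (g (\<phi> 3)) = {}" using e[of 2 3] m(6) by simp
  qed
next
  assume XM: "\<forall>a\<in>C. x_monotone (g a)"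
  assume "contains_induced_ordered 4 P4_edge C (end_order g) (co_int_graph g)"
  then obtain \<phi> where V: "\<forall>i<4. \<phi> i \<in> C" and L: "\<forall>i<4. \<forall>j<4. i < j \<longrightarrow> end_order g (\<phi> i) (\<phi> j)"
    and E: "\<forall>i<4. \<forall>j<4. i \<noteq> j \<longrightarrow> (P4_edge i j \<longleftrightarrow> co_int_graph g (\<phi> i) (\<phi> j))"
    by (rule cioE)
  have o: "snd (pathstart (g (\<phi> 0))) < snd (pathstart (g (\<phi> 1)))"
    "snd (pathstart (g (\<phi> 1))) < snd (pathstart (g (\<phi> 2)))"
    "snd (pathstart (g (\<phi> 2))) < snd (pathstart (g (\<phi> 3)))"
    using L unfolding end_order_def by auto
  have ne: "\<phi> i \<noteq> \<phi> j" if "i < j" "j < 4" for i j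
  proof
    assume "\<phi> i = \<phi> j"
    then show False using L[rule_format, of i j] that unfolding end_order_def by simp
  qed
  have e: "P4_edge i j \<longleftrightarrow> path_image (g (\<phi> i)) \<inter> path_image (g (\<phi> j)) = {}"
    if "i < j" "j < 4" for i j
  proof -
    have "i < 4" "i \<noteq> j" using that by auto
    then show ?thesis using E[rule_format, of i j] ne[OF that] that unfolding co_int_graph_def by simp
  qed
  have m: "\<not> P4_edge 0 2" "\<not> P4_edge 1 3" "P4_edge 0 1" "P4_edge 1 2" "P4_edge 2 3"
    by (auto simp: P4_edge_def)
  show False
  proof (rule part2[OF grounded grounded grounded grounded _ _ _ _ _ _ _ _ _ o])
    show "\<phi> 0 \<in> C" "\<phi> 1 \<in> C" "\<phi> 2 \<in> C" "\<phi> 3 \<in> C" using V by simp_all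
    then show "x_monotone (g (\<phi> 0))" "x_monotone (g (\<phi> 1))" "x_monotone (g (\<phi> 2))" "x_monotone (g (\<phi> 3))"
      using XM by blast+
    show "path_image (g (\<phi> 0)) \<inter> path_image (g (\<phi> 2)) \<noteq> {}" using e[of 0 2] m(1) by simp
    show "path_image (g (\<phi> 1)) \<inter> path_image (g (\<phi> 3)) \<noteq> {}" using e[of 1 3] m(2) by simp
    show "path_image (g (\<phi> 0)) \<inter> path_image (g (\<phi> 1)) = {}" using e[of 0 1] m(3) by simp
    show "path_image (g (\<phi> 1)) \<inter> path_image (g (\<phi> 2)) = {}" using e[of 1 2] m(4) by simp
    show "path_image (g (\<phi> 2)) \<inter> path_image (g (\<phi> 3)) = {}" using e[of 2 3] m(5) by simp
  qed
qed

end
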